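(* Suppose that for an agent $i$ the local potential $\Phi_i$ admits a stage potential: there is $\varphi_i:\mathcal S\times\mathcal A\to[0,\overline\varphi]$ with $\Phi_i(\theta)=\mathbb E_{\xi^\theta}\left[\sum_{t\ge0}\gamma^t\varphi_i(s(t),a(t))\right]$ for all softmax parameters $\theta$ (with $s(0)\sim\mu$). Then for every integer $\kappa\ge0$ and all $\theta,\theta'$, $$\left|\Phi_i(\theta_{N_i^\kappa},\theta'_{-N_i^\kappa})-\Phi_i(\theta_{N_i^\kappa},\theta_{-N_i^\kappa})\right|\le\frac{\sqrt2\,\overline\varphi}{(1-\gamma)^2}\Big(\sum_{j\in-N_i^\kappa}|\mathcal A_j|\Big)\max_{j\in-N_i^\kappa}\|\theta_j'-\theta_j\|.$$
   Context: Networked Markov game. There are $n$ agents $\mathcal N=\{1,\dots,n\}$ placed at the nodes of an undirected graph $\mathcal G=(\mathcal N,\mathcal E)$ with graph distance $\mathrm{dist}$. For an integer $\kappa\ge0$, $N_i^\kappa=\{j\in\mathcal N:\mathrm{dist}(i,j)\le\kappa\}$ (so $i\in N_i^\kappa$), $\mathcal N_i=N_i^1$, $-N_i^\kappa=\mathcal N\setminus N_i^\kappa$, and $n(\kappa)=\max_i|N_i^\kappa|$. Agent $i$ has a finite local state space $\mathcal S_i$ and a finite local action space $\mathcal A_i$; $\mathcal S=\prod_i\mathcal S_i$, $\mathcal A=\prod_i\mathcal A_i$, and for $I\subseteq\mathcal N$ we write $s_I,a_I,\mathcal S_I,\mathcal A_I$ for the joint states/actions/spaces of the agents in $I$ (the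 subscript $-i$ means $\mathcal N\setminus\{i\}$). The dynamics are $\mathcal P(s'\mid s,a)=\prod_i\mathcal P_i(s_i'\mid s_{\mathcal N_i},a_i)$, the initial distribution is $\mu\in\Delta(\mathcal S)$, and $\gamma\in(0,1)$ is a discount factor. A joint policy $\xi=(\xi_1,\dots,\xi_n)$ acts by $\xi(a\mid s)=\prod_i\xi_i(a_i\mid s_i)$. Softmax policies: for $\theta_i\in\mathbb R^{|\mathcal S_i||\mathcal A_i|}$, $\xi_i^{\theta_i}(a_i\mid s_i)=\exp(\theta_{i,s_i,a_i})/\sum_{a_i'\in\mathcal A_i}\exp(\theta_{i,s_i,a_i'})$; $\theta=(\theta_1,\dots,\theta_n)$, $\xi^\theta=(\xi_1^{\theta_1},\dots,\xi_n^{\theta_n})$. Norms $\|\cdot\|$ are Euclidean; $(\theta_{N_i^\kappa},\theta'_{-N_i^\kappa})$ denotes the parameter equal to $\theta_j$ for $j\in N_i^\kappa$ and $\theta'_j$ otherwise. *)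

theory Defs
  imports "HOL-Analysis.Analysis"
begin

text \<open>The undirected graph is given by a
symmetric edge relation E.
Joint states/actions are functions 'i => 's / 'i => 'a in the product sets.\<close>

definition graph_ball :: "('i \<Rightarrow> 'i \<Rightarrow> bool) \<Rightarrow> nat \<Rightarrow> 'i \<Rightarrow> 'i set" where
  "graph_ball E k i = {j. (i, j) \<in> ({(x, y). x = y \<or> E x y}) ^^ k}"
  \<comment> \<open>N_i^k = {j. dist(i,j) <= k}\<close>

definition joint_space :: "('i \<Rightarrow> 'b set) \<Rightarrow> ('i \<Rightarrow> 'b) set" where
  "joint_space X = PiE UNIV X"

definition softmax :: "('s \<Rightarrow> 'a \<Rightarrow> real) \<Rightarrow> 'a set \<Rightarrow> 's \<Rightarrow> 'a \<Rightarrow> real" where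
  "softmax th Ai s a = exp (th s a) / (\<Sum>b\<in>Ai. exp (th s b))"

definition pol :: "('i::finite \<Rightarrow> 's \<Rightarrow> 'a \<Rightarrow> real) \<Rightarrow> ('i \<Rightarrow> 'a set)
     \<Rightarrow> ('i \<Rightarrow> 's) \<Rightarrow> ('i \<Rightarrow> 'a) \<Rightarrow> real" where
  "pol th A s a = (\<Prod>i\<in>UNIV. softmax (th i) (A i) (s i) (a i))"

definition joint_trans :: "('i::finite \<Rightarrow> ('i \<Rightarrow> 's) \<Rightarrow> 'a \<Rightarrow> 's \<Rightarrow> real)
     \<Rightarrow> ('i \<Rightarrow> 's) \<Rightarrow> ('i \<Rightarrow> 'a) \<Rightarrow> ('i \<Rightarrow> 's) \<Rightarrow> real" where
  "joint_trans P s a s' = (\<Prod>i\<in>UNIV. P i s (a i) (s' i))"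

fun state_dist :: "('i::finite \<Rightarrow> 's set) \<Rightarrow> ('i \<Rightarrow> 'a set)
     \<Rightarrow> ('i \<Rightarrow> ('i \<Rightarrow> 's) \<Rightarrow> 'a \<Rightarrow> 's \<Rightarrow> real) \<Rightarrow> (('i \<Rightarrow> 's) \<Rightarrow> real)
     \<Rightarrow> ('i \<Rightarrow> 's \<Rightarrow> 'a \<Rightarrow> real) \<Rightarrow> nat \<Rightarrow> ('i \<Rightarrow> 's) \<Rightarrow> real" where
  "state_dist S A P mu th 0 s' = mu s'"
| "state_dist S A P mu th (Suc t) s' =
     (\<Sum>s\<in>joint_space S. \<Sum>a\<in>joint_space A.
        state_dist S A P mu th t s * pol th A s a * joint_trans P s a s')"

definition disc_value :: "('i::finite \<Rightarrow> 's set) \<Rightarrow> ('i \<Rightarrow> 'a set)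
     \<Rightarrow> ('i \<Rightarrow> ('i \<Rightarrow> 's) \<Rightarrow> 'a \<Rightarrow> 's \<Rightarrow> real) \<Rightarrow> (('i \<Rightarrow> 's) \<Rightarrow> real) \<Rightarrow> real
     \<Rightarrow> (('i \<Rightarrow> 's) \<Rightarrow> ('i \<Rightarrow> 'a) \<Rightarrow> real)
     \<Rightarrow> ('i \<Rightarrow> 's \<Rightarrow> 'a \<Rightarrow> real) \<Rightarrow> real" where
  "disc_value S A P mu \<gamma> \<phi> th =
     (\<Sum>t. \<gamma> ^ t * (\<Sum>s\<in>joint_space S. \<Sum>a\<in>joint_space A.
          state_dist S A P mu th t s * pol th A s a * \<phi> s a))"

definition param_norm :: "'s set \<Rightarrow> 'a set \<Rightarrow> ('s \<Rightarrow> 'a \<Rightarrow> real) \<Rightarrow> real" where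
  "param_norm Sj Aj th = sqrt (\<Sum>s\<in>Sj. \<Sum>a\<in>Aj. (th s a)\<^sup>2)"

end

theory Submission imports Defs "HOL-Probability.Probability_Mass_Function" begin


definition rsm :: "('a \<Rightarrow> real) \<Rightarrow> 'a set \<Rightarrow> 'a \<Rightarrow> real" where
  "rsm x B b = exp (x b) / (\<Sum>c\<in>B. exp (x c))"

lemma rsm_sum: "finite B \<Longrightarrow> B \<noteq> {} \<Longrightarrow> (\<Sum>b\<in>B. rsm x B b) = 1"
proof -
  assume "finite B" "B \<noteq> {}"
  then have "(\<Sum>c\<in>B. exp (x c)) > 0" by (intro sum_pos) auto
  then show ?thesis unfolding rsm_def by (simp add: sum_divide_distrib[symmetric])
qed

lemma rsm_pos: "finite B \<Longrightarrow> B \<noteq> {} \<Longrightarrow> rsm x B b > 0"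
proof -
  assume "finite B" "B \<noteq> {}"
  then have "(\<Sum>c\<in>B. exp (x c)) > 0" by (intro sum_pos) auto
  then show ?thesis unfolding rsm_def by simp
qed

lemma exp_aux: fixes v :: real shows "\<bar>exp v - 1\<bar> \<le> \<bar>v\<bar> * (exp v + 1)"
proof (cases "v \<ge> 0")
  case True
  have e1: "1 - v \<le> exp (-v)" using exp_ge_add_one_self[of "-v"] by simp
  have "exp v * exp (-v) = 1" by (simp add: exp_minus)
  then have "exp v - 1 = exp v * (1 - exp (-v))" by (simp add: algebra_simps)
  also have "\<dots> \<le> exp v * v" using e1 by (intro mult_left_mono) auto
  also have "\<dots> \<le> v * (exp v + 1)" using True by (simp add: algebra_simps)
  finally show ?thesis using True by simp
next
  case False
  have "1 + v \<le> exp v" by simp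
  moreover have "exp v < 1" using False by simp
  ultimately have "\<bar>exp v - 1\<bar> = 1 - exp v" by simp
  also have "\<dots> \<le> - v" using exp_ge_add_one_self[of v] by linarith
  also have "- v \<le> (- v) * (exp v + 1)" using False mult_nonneg_nonneg[of "-v" "exp v"]
    by (simp add: algebra_simps)
  finally show ?thesis using False by simp
qed

lemma key_ineq:
  fixes p y :: real
  assumes "0 < p" "p \<le> 1"
  shows "2*p*(1-p)* abs (exp (2*y) - 1) \<le> abs (2*y) * (1 - p + p*exp (2*y))"
proof -
  define z where "z = exp y"
  have z0: "z > 0" unfolding z_def by simp
  have e2: "exp (2*y) = z^2" unfolding z_def by (simp add: exp_double[symmetric] mult.commute power2_eq_square exp_add[symmetric])
  have h1: "p*(1-p)*(z+1)^2 \<le> 1 - p + p*z^2"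
  proof -
    have "1 - p + p*z^2 - p*(1-p)*(z+1)^2 = ((1-p) - p*z)^2" by (simp add: power2_eq_square algebra_simps)
    then show ?thesis using zero_le_power2[of "(1-p) - p*z"] by linarith
  qed
  have h2: "\<bar>z - 1\<bar> \<le> \<bar>y\<bar> * (z + 1)" using exp_aux[of y] unfolding z_def .
  have sq: "z^2 - 1 = (z - 1) * (z + 1)" by (simp add: power2_eq_square algebra_simps)
  have "abs (z^2 - 1) = \<bar>z - 1\<bar> * (z + 1)" unfolding sq abs_mult using z0 by simp
  then have "2*p*(1-p)* abs (exp (2*y) - 1) = 2*(p*(1-p)*(z+1))* \<bar>z - 1\<bar>"
    unfolding e2 by (simp add: algebra_simps)
  also have "\<dots> \<le> 2*(p*(1-p)*(z+1))*(\<bar>y\<bar> * (z + 1))"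
    using h2 assms z0 by (intro mult_left_mono) auto
  also have "\<dots> = 2* \<bar>y\<bar>*(p*(1-p)*(z+1)^2)" by (simp add: power2_eq_square algebra_simps)
  also have "\<dots> \<le> 2* \<bar>y\<bar>*(1 - p + p*z^2)" using h1 by (intro mult_left_mono) auto
  finally show ?thesis by (simp add: e2 abs_mult)
qed




lemma rsm_one:
  assumes fin: "finite B" and cB: "c \<in> B"
  shows "(\<Sum>b\<in>B. \<bar>rsm (x(c := x c + u)) B b - rsm x B b\<bar>) \<le> \<bar>u\<bar>"
proof -
  let ?y = "x(c := x c + u)"
  define Z where "Z = (\<Sum>c\<in>B. exp (x c))"
  define e where "e = exp (x c)"
  define p where "p = e / Z"
  define w where "w = exp u"
  define D where "D = 1 - p + p*w"
  have Bne: "B \<noteq> {}" using cB by auto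
  have Z0: "Z > 0" unfolding Z_def using fin Bne by (intro sum_pos) auto
  have e0: "e > 0" unfolding e_def by simp
  have eZ: "e \<le> Z" unfolding Z_def e_def using fin cB by (intro member_le_sum) auto
  have p0: "0 < p" unfolding p_def using Z0 e0 by simp
  have p1: "p \<le> 1" unfolding p_def using Z0 eZ by simp
  have w0: "w > 0" unfolding w_def by simp
  have D0: "D > 0" unfolding D_def using p1 mult_pos_pos[OF p0 w0] by linarith
  have pZ: "p * Z = e" unfolding p_def using Z0 by simp
  have "(\<Sum>b\<in>B. exp (?y b)) = exp (?y c) + (\<Sum>b\<in>B-{c}. exp (?y b))"
    using fin cB by (simp add: sum.remove)
  also have "(\<Sum>b\<in>B-{c}. exp (?y b)) = (\<Sum>b\<in>B-{c}. exp (x b))" by (intro sum.cong) auto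
  also have "\<dots> = Z - e" unfolding Z_def e_def using fin cB by (simp add: sum_diff1)
  also have "exp (?y c) = e * w" unfolding e_def w_def by (simp add: exp_add)
  finally have ZY: "(\<Sum>b\<in>B. exp (?y b)) = Z * D"
    unfolding D_def using pZ by (simp add: algebra_simps)
  have yc: "rsm ?y B c = p*w/D"
    unfolding rsm_def ZY using Z0 by (simp add: exp_add e_def[symmetric] w_def[symmetric] p_def)
  have yb: "rsm ?y B b = rsm x B b / D" if "b \<in> B - {c}" for b
    unfolding rsm_def ZY using that by (simp add: Z_def)
  have xc: "rsm x B c = p" unfolding rsm_def p_def e_def Z_def ..
  have rest: "(\<Sum>b\<in>B-{c}. rsm x B b) = 1 - p"
    using rsm_sum[OF fin Bne, of x] fin cB xc by (simp add: sum.remove)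
  have "(\<Sum>b\<in>B. \<bar>rsm ?y B b - rsm x B b\<bar>)
      = \<bar>p*w/D - p\<bar> + (\<Sum>b\<in>B-{c}. \<bar>rsm ?y B b - rsm x B b\<bar>)"
    using fin cB yc xc by (simp add: sum.remove)
  also have "(\<Sum>b\<in>B-{c}. \<bar>rsm ?y B b - rsm x B b\<bar>) = (\<Sum>b\<in>B-{c}. rsm x B b * \<bar>1/D - 1\<bar>)"
  proof (intro sum.cong refl)
    fix b assume b: "b \<in> B - {c}"
    have "rsm ?y B b - rsm x B b = rsm x B b * (1/D - 1)" using yb[OF b] by (simp add: algebra_simps)
    then show "\<bar>rsm ?y B b - rsm x B b\<bar> = rsm x B b * \<bar>1/D - 1\<bar>"
      using rsm_pos[OF fin Bne, of x b] by (simp add: abs_mult)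
  qed
  also have "\<dots> = (1 - p) * \<bar>1/D - 1\<bar>" using rest by (simp add: sum_distrib_right[symmetric])
  also have "p*w/D - p = p*(1-p)*(w-1)/D" using D0 unfolding D_def by (simp add: field_simps)
  also have "1/D - 1 = p*(1-w)/D" using D0 unfolding D_def by (simp add: field_simps)
  also have "\<bar>p*(1-p)*(w-1)/D\<bar> + (1-p) * \<bar>p*(1-w)/D\<bar> = 2*p*(1-p)* abs (w-1) / D"
    using D0 p0 p1 by (simp add: abs_mult abs_minus_commute)
  also have "\<dots> \<le> \<bar>u\<bar>"
  proof -
    have "2*p*(1-p)* abs (exp (2*(u/2)) - 1) \<le> abs (2*(u/2)) * (1 - p + p*exp (2*(u/2)))"
      by (rule key_ineq[OF p0 p1])
    then have "2*p*(1-p)* abs (w-1) \<le> \<bar>u\<bar> * D" unfolding w_def D_def by simp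
    then show ?thesis using D0 by (simp add: divide_le_eq)
  qed
  finally show ?thesis .
qed

lemma rsm_congB: "(\<And>b. b \<in> B \<Longrightarrow> x b = y b) \<Longrightarrow> b \<in> B \<Longrightarrow> rsm x B b = rsm y B b"
  unfolding rsm_def by (metis (mono_tags, lifting) sum.cong)

lemma rsm_L1:
  assumes fin: "finite B"
  shows "(\<Sum>b\<in>B. \<bar>rsm y B b - rsm x B b\<bar>) \<le> (\<Sum>b\<in>B. \<bar>y b - x b\<bar>)"
proof -
  have "\<forall>x y. (\<forall>b\<in>B-C. x b = y b) \<longrightarrow> (\<Sum>b\<in>B. \<bar>rsm y B b - rsm x B b\<bar>) \<le> (\<Sum>b\<in>C. \<bar>y b - x b\<bar>)"
    if "C \<subseteq> B" for C
  proof -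
    have "finite C" using that fin finite_subset by blast
    then show ?thesis using that
    proof (induction C rule: finite_induct)
      case empty
      show ?case
      proof (intro allI impI)
        fix x y :: "'a \<Rightarrow> real" assume "\<forall>b\<in>B-{}. x b = y b"
        then have "rsm y B b = rsm x B b" if "b \<in> B" for b using rsm_congB[of B y x b] that by auto
        then show "(\<Sum>b\<in>B. \<bar>rsm y B b - rsm x B b\<bar>) \<le> (\<Sum>b\<in>{}. \<bar>y b - x b\<bar>)" by simp
      qed
    next
      case (insert c C)
      show ?case
      proof (intro allI impI)
        fix x y :: "'a \<Rightarrow> real" assume agree: "\<forall>b\<in>B - insert c C. x b = y b"
        define z where "z = x(c := x c + (y c - x c))"
        have cB: "c \<in> B" using insert by auto
        have "\<forall>b\<in>B - C. z b = y b" using agree unfolding z_def by auto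
        then have IH: "(\<Sum>b\<in>B. \<bar>rsm y B b - rsm z B b\<bar>) \<le> (\<Sum>b\<in>C. \<bar>y b - z b\<bar>)"
          using insert by blast
        have "(\<Sum>b\<in>C. \<bar>y b - z b\<bar>) = (\<Sum>b\<in>C. \<bar>y b - x b\<bar>)"
          unfolding z_def using insert.hyps by (intro sum.cong) auto
        note IH = IH[unfolded this]
        have one: "(\<Sum>b\<in>B. \<bar>rsm z B b - rsm x B b\<bar>) \<le> \<bar>y c - x c\<bar>"
          unfolding z_def by (rule rsm_one[OF fin cB])
        have "(\<Sum>b\<in>B. \<bar>rsm y B b - rsm x B b\<bar>) \<le> (\<Sum>b\<in>B. \<bar>rsm y B b - rsm z B b\<bar> + \<bar>rsm z B b - rsm x B b\<bar>)"
          by (intro sum_mono) linarith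
        also have "\<dots> \<le> (\<Sum>b\<in>C. \<bar>y b - x b\<bar>) + \<bar>y c - x c\<bar>"
          using IH one by (simp add: sum.distrib)
        also have "\<dots> = (\<Sum>b\<in>insert c C. \<bar>y b - x b\<bar>)" using insert.hyps by simp
        finally show "(\<Sum>b\<in>B. \<bar>rsm y B b - rsm x B b\<bar>) \<le> (\<Sum>b\<in>insert c C. \<bar>y b - x b\<bar>)" .
      qed
    qed
  qed
  then show ?thesis by blast
qed




lemma prod_diff_PiE:
  fixes f g :: "'i \<Rightarrow> 'b \<Rightarrow> real"
  assumes "finite I" "\<And>j. j \<in> I \<Longrightarrow> finite (B j)"
    and "\<And>j b. j \<in> I \<Longrightarrow> b \<in> B j \<Longrightarrow> f j b \<ge> 0"
    and "\<And>j b. j \<in> I \<Longrightarrow> b \<in> B j \<Longrightarrow> g j b \<ge> 0"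
    and "\<And>j. j \<in> I \<Longrightarrow> (\<Sum>b\<in>B j. f j b) = 1"
    and "\<And>j. j \<in> I \<Longrightarrow> (\<Sum>b\<in>B j. g j b) = 1"
  shows "(\<Sum>a\<in>PiE I B. \<bar>(\<Prod>j\<in>I. f j (a j)) - (\<Prod>j\<in>I. g j (a j))\<bar>)
         \<le> (\<Sum>j\<in>I. \<Sum>b\<in>B j. \<bar>f j b - g j b\<bar>)"
  using assms
proof (induction I rule: finite_induct)
  case empty
  then show ?case by simp
next
  case (insert x I)
  define F where "F h = (\<Prod>j\<in>I. f j (h j))" for h
  define G where "G h = (\<Prod>j\<in>I. g j (h j))" for h
  have fu: "(\<Prod>j\<in>I. f j ((h(x:=y)) j)) = F h" "(\<Prod>j\<in>I. g j ((h(x:=y)) j)) = G h" for h y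
    unfolding F_def G_def using insert.hyps by (auto intro!: prod.cong)
  have fu2: "F (h(x:=z)) = (\<Prod>j\<in>I. f j (h j))" "G (h(x:=z)) = (\<Prod>j\<in>I. g j (h j))" for h z
    unfolding F_def G_def using insert.hyps by (auto intro!: prod.cong)
  have fin: "finite (PiE I B)" using insert by (intro finite_PiE) auto
  have "(\<Sum>a\<in>PiE (insert x I) B. \<bar>(\<Prod>j\<in>insert x I. f j (a j)) - (\<Prod>j\<in>insert x I. g j (a j))\<bar>)
      = (\<Sum>(y,h)\<in>B x \<times> PiE I B. \<bar>f x y * F h - g x y * G h\<bar>)"
    using insert.prems insert.hyps
    by (intro sum.reindex_bij_witness[of _ "\<lambda>(y,h). h(x := y)" "\<lambda>a. (a x, a(x := undefined))"])
       (auto simp: PiE_def extensional_def fu fu2)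
  also have "\<dots> = (\<Sum>y\<in>B x. \<Sum>h\<in>PiE I B. \<bar>f x y * F h - g x y * G h\<bar>)"
    by (subst sum.cartesian_product) auto
  also have "\<dots> \<le> (\<Sum>y\<in>B x. \<Sum>h\<in>PiE I B. \<bar>f x y - g x y\<bar> * F h + g x y * \<bar>F h - G h\<bar>)"
  proof (intro sum_mono)
    fix y h assume y: "y \<in> B x" and h: "h \<in> PiE I B"
    have F0: "F h \<ge> 0" unfolding F_def using h insert.prems by (intro prod_nonneg) (auto simp: PiE_iff)
    have g0: "g x y \<ge> 0" using insert.prems y by auto
    have eq: "f x y * F h - g x y * G h = (f x y - g x y) * F h + g x y * (F h - G h)" by (simp add: algebra_simps)
    show "\<bar>f x y * F h - g x y * G h\<bar> \<le> \<bar>f x y - g x y\<bar> * F h + g x y * \<bar>F h - G h\<bar>"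
      using F0 g0 abs_triangle_ineq[of "(f x y - g x y) * F h" "g x y * (F h - G h)"] unfolding eq by (simp add: abs_mult)
  qed
  also have "\<dots> = (\<Sum>y\<in>B x. \<bar>f x y - g x y\<bar>) * (\<Sum>h\<in>PiE I B. F h)
        + (\<Sum>y\<in>B x. g x y) * (\<Sum>h\<in>PiE I B. \<bar>F h - G h\<bar>)"
    by (simp add: sum.distrib sum_distrib_left[symmetric] sum_distrib_right[symmetric])
  also have "(\<Sum>h\<in>PiE I B. F h) = 1"
  proof -
    have "(\<Sum>h\<in>PiE I B. F h) = (\<Prod>j\<in>I. \<Sum>b\<in>B j. f j b)"
      unfolding F_def using insert by (subst prod_sum_PiE) auto
    also have "\<dots> = 1" using insert.prems by (intro prod.neutral) auto
    finally show ?thesis .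
  qed
  also have "(\<Sum>y\<in>B x. g x y) = 1" using insert.prems by auto
  also have "(\<Sum>h\<in>PiE I B. \<bar>F h - G h\<bar>) \<le> (\<Sum>j\<in>I. \<Sum>b\<in>B j. \<bar>f j b - g j b\<bar>)"
    unfolding F_def G_def using insert.prems by (intro insert.IH) auto
  finally show ?case using insert.hyps by (simp add: add.commute)
qed




locale mdp =
  fixes S :: "'i::finite \<Rightarrow> 's set" and A :: "'i \<Rightarrow> 'a set"
    and P :: "'i \<Rightarrow> ('i \<Rightarrow> 's) \<Rightarrow> 'a \<Rightarrow> 's \<Rightarrow> real"
    and mu :: "('i \<Rightarrow> 's) \<Rightarrow> real"
  assumes S_fin: "\<And>j. finite (S j)" and S_ne: "\<And>j. S j \<noteq> {}"
    and A_fin: "\<And>j. finite (A j)" and A_ne: "\<And>j. A j \<noteq> {}"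
    and P_nonneg: "\<And>j s b s'. s \<in> joint_space S \<Longrightarrow> b \<in> A j \<Longrightarrow> s' \<in> S j \<Longrightarrow> P j s b s' \<ge> 0"
    and P_sum: "\<And>j s b. s \<in> joint_space S \<Longrightarrow> b \<in> A j \<Longrightarrow> (\<Sum>s'\<in>S j. P j s b s') = 1"
    and mu_nonneg: "\<And>s. s \<in> joint_space S \<Longrightarrow> mu s \<ge> 0"
    and mu_sum: "(\<Sum>s\<in>joint_space S. mu s) = 1"
begin

lemma SS_fin: "finite (joint_space S)" unfolding joint_space_def using S_fin by (intro finite_PiE) auto
lemma AA_fin: "finite (joint_space A)" unfolding joint_space_def using A_fin by (intro finite_PiE) auto
lemma SS_ne: "joint_space S \<noteq> {}" unfolding joint_space_def using S_ne by (simp add: PiE_eq_empty_iff)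
lemma AA_ne: "joint_space A \<noteq> {}" unfolding joint_space_def using A_ne by (simp add: PiE_eq_empty_iff)

lemma softmax_rsm: "softmax th B s b = rsm (th s) B b"
  unfolding softmax_def rsm_def ..

lemma pol_nonneg: "pol th A s a \<ge> 0"
  unfolding pol_def softmax_rsm by (intro prod_nonneg) (simp add: rsm_pos A_fin A_ne less_imp_le)

lemma pol_sum: "(\<Sum>a\<in>joint_space A. pol th A s a) = 1"
proof -
  have "(\<Sum>a\<in>joint_space A. pol th A s a) = (\<Prod>j\<in>UNIV. \<Sum>b\<in>A j. softmax (th j) (A j) (s j) b)"
    unfolding pol_def joint_space_def using A_fin by (subst prod_sum_PiE) auto
  also have "\<dots> = 1" unfolding softmax_rsm by (intro prod.neutral) (simp add: rsm_sum A_fin A_ne)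
  finally show ?thesis .
qed

lemma jt_nonneg: "s \<in> joint_space S \<Longrightarrow> a \<in> joint_space A \<Longrightarrow> s' \<in> joint_space S \<Longrightarrow> joint_trans P s a s' \<ge> 0"
  unfolding joint_trans_def joint_space_def using P_nonneg
  by (intro prod_nonneg) (auto simp: joint_space_def PiE_iff)

lemma jt_sum: "s \<in> joint_space S \<Longrightarrow> a \<in> joint_space A \<Longrightarrow> (\<Sum>s'\<in>joint_space S. joint_trans P s a s') = 1"
proof -
  assume s: "s \<in> joint_space S" and a: "a \<in> joint_space A"
  have "(\<Sum>s'\<in>joint_space S. joint_trans P s a s') = (\<Prod>j\<in>UNIV. \<Sum>b\<in>S j. P j s (a j) b)"
    unfolding joint_trans_def joint_space_def using S_fin by (subst prod_sum_PiE) auto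
  also have "\<dots> = 1" using P_sum s a by (intro prod.neutral) (auto simp: joint_space_def PiE_iff)
  finally show ?thesis .
qed

abbreviation "sd th t s \<equiv> state_dist S A P mu th t s"

lemma sd_nonneg: "s \<in> joint_space S \<Longrightarrow> sd th t s \<ge> 0"
proof (induction t arbitrary: s)
  case 0 then show ?case using mu_nonneg by simp
next
  case (Suc t)
  show ?case unfolding state_dist.simps
    using Suc pol_nonneg jt_nonneg by (intro sum_nonneg mult_nonneg_nonneg) auto
qed

lemma sd_sum: "(\<Sum>s\<in>joint_space S. sd th t s) = 1"
proof (induction t)
  case 0 then show ?case using mu_sum by simp
next
  case (Suc t)
  let ?SS = "joint_space S" and ?AA = "joint_space A"
  have "(\<Sum>s'\<in>?SS. sd th (Suc t) s') = (\<Sum>s'\<in>?SS. \<Sum>s\<in>?SS. \<Sum>a\<in>?AA. sd th t s * pol th A s a * joint_trans P s a s')"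
    by simp
  also have "\<dots> = (\<Sum>s\<in>?SS. \<Sum>s'\<in>?SS. \<Sum>a\<in>?AA. sd th t s * pol th A s a * joint_trans P s a s')"
    by (rule sum.swap)
  also have "\<dots> = (\<Sum>s\<in>?SS. \<Sum>a\<in>?AA. \<Sum>s'\<in>?SS. sd th t s * pol th A s a * joint_trans P s a s')"
    by (intro sum.cong refl sum.swap)
  also have "\<dots> = (\<Sum>s\<in>?SS. \<Sum>a\<in>?AA. sd th t s * pol th A s a * (\<Sum>s'\<in>?SS. joint_trans P s a s'))"
    by (simp add: sum_distrib_left)
  also have "\<dots> = (\<Sum>s\<in>?SS. \<Sum>a\<in>?AA. sd th t s * pol th A s a)"
    using jt_sum by (intro sum.cong refl) auto
  also have "\<dots> = (\<Sum>s\<in>?SS. sd th t s)"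
    by (simp add: sum_distrib_left[symmetric] pol_sum)
  finally show ?case using Suc by simp
qed

definition "Gerr th1 th2 t = (\<Sum>s\<in>joint_space S. \<Sum>a\<in>joint_space A.
   \<bar>sd th1 t s * pol th1 A s a - sd th2 t s * pol th2 A s a\<bar>)"
definition "err th1 th2 t = (\<Sum>s\<in>joint_space S. \<bar>sd th1 t s - sd th2 t s\<bar>)"

context
  fixes th1 th2 Dl
  assumes Dl: "\<And>s. s \<in> joint_space S \<Longrightarrow> (\<Sum>a\<in>joint_space A. \<bar>pol th1 A s a - pol th2 A s a\<bar>) \<le> Dl"
begin

lemma G_le: "Gerr th1 th2 t \<le> err th1 th2 t + Dl"
proof -
  let ?SS = "joint_space S" and ?AA = "joint_space A"
  have "Gerr th1 th2 t \<le> (\<Sum>s\<in>?SS. \<Sum>a\<in>?AA. \<bar>sd th1 t s - sd th2 t s\<bar> * pol th1 A s a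
                  + sd th2 t s * \<bar>pol th1 A s a - pol th2 A s a\<bar>)"
    unfolding Gerr_def
  proof (intro sum_mono)
    fix s a assume s: "s \<in> ?SS"
    have e: "sd th1 t s * pol th1 A s a - sd th2 t s * pol th2 A s a
       = (sd th1 t s - sd th2 t s) * pol th1 A s a + sd th2 t s * (pol th1 A s a - pol th2 A s a)"
      by (simp add: algebra_simps)
    show "\<bar>sd th1 t s * pol th1 A s a - sd th2 t s * pol th2 A s a\<bar>
        \<le> \<bar>sd th1 t s - sd th2 t s\<bar> * pol th1 A s a + sd th2 t s * \<bar>pol th1 A s a - pol th2 A s a\<bar>"
      unfolding e using pol_nonneg[of th1 s a] sd_nonneg[OF s, of th2 t]
        abs_triangle_ineq[of "(sd th1 t s - sd th2 t s) * pol th1 A s a" "sd th2 t s * (pol th1 A s a - pol th2 A s a)"]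
      by (simp add: abs_mult)
  qed
  also have "\<dots> = (\<Sum>s\<in>?SS. \<bar>sd th1 t s - sd th2 t s\<bar> * (\<Sum>a\<in>?AA. pol th1 A s a)
                  + sd th2 t s * (\<Sum>a\<in>?AA. \<bar>pol th1 A s a - pol th2 A s a\<bar>))"
    by (simp add: sum.distrib sum_distrib_left)
  also have "\<dots> \<le> (\<Sum>s\<in>?SS. \<bar>sd th1 t s - sd th2 t s\<bar> + sd th2 t s * Dl)"
  proof (intro sum_mono)
    fix s assume s: "s \<in> ?SS"
    show "\<bar>sd th1 t s - sd th2 t s\<bar> * (\<Sum>a\<in>?AA. pol th1 A s a)
                  + sd th2 t s * (\<Sum>a\<in>?AA. \<bar>pol th1 A s a - pol th2 A s a\<bar>)
          \<le> \<bar>sd th1 t s - sd th2 t s\<bar> + sd th2 t s * Dl"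
      using mult_left_mono[OF Dl[OF s] sd_nonneg[OF s]] by (simp add: pol_sum)
  qed
  also have "\<dots> = err th1 th2 t + Dl"
    unfolding err_def by (simp add: sum.distrib sum_distrib_right[symmetric] sd_sum)
  finally show ?thesis .
qed

lemma err_Suc: "err th1 th2 (Suc t) \<le> Gerr th1 th2 t"
proof -
  let ?SS = "joint_space S" and ?AA = "joint_space A"
  let ?T = "joint_trans P"
  have "err th1 th2 (Suc t) = (\<Sum>s'\<in>?SS. \<bar>\<Sum>s\<in>?SS. \<Sum>a\<in>?AA.
          (sd th1 t s * pol th1 A s a - sd th2 t s * pol th2 A s a) * ?T s a s'\<bar>)"
    unfolding err_def state_dist.simps
    by (simp add: sum_subtractf[symmetric] algebra_simps)
  also have "\<dots> \<le> (\<Sum>s'\<in>?SS. \<Sum>s\<in>?SS. \<Sum>a\<in>?AA.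
          \<bar>sd th1 t s * pol th1 A s a - sd th2 t s * pol th2 A s a\<bar> * ?T s a s')"
  proof (intro sum_mono)
    fix s' assume s': "s' \<in> ?SS"
    have "\<bar>\<Sum>s\<in>?SS. \<Sum>a\<in>?AA. (sd th1 t s * pol th1 A s a - sd th2 t s * pol th2 A s a) * ?T s a s'\<bar>
       \<le> (\<Sum>s\<in>?SS. \<bar>\<Sum>a\<in>?AA. (sd th1 t s * pol th1 A s a - sd th2 t s * pol th2 A s a) * ?T s a s'\<bar>)"
      by (rule sum_abs)
    also have "\<dots> \<le> (\<Sum>s\<in>?SS. \<Sum>a\<in>?AA. \<bar>(sd th1 t s * pol th1 A s a - sd th2 t s * pol th2 A s a) * ?T s a s'\<bar>)"
      by (intro sum_mono sum_abs)
    also have "\<dots> = (\<Sum>s\<in>?SS. \<Sum>a\<in>?AA. \<bar>sd th1 t s * pol th1 A s a - sd th2 t s * pol th2 A s a\<bar> * ?T s a s')"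
      using jt_nonneg s' by (intro sum.cong refl) (simp add: abs_mult)
    finally show "\<bar>\<Sum>s\<in>?SS. \<Sum>a\<in>?AA. (sd th1 t s * pol th1 A s a - sd th2 t s * pol th2 A s a) * ?T s a s'\<bar>
       \<le> (\<Sum>s\<in>?SS. \<Sum>a\<in>?AA. \<bar>sd th1 t s * pol th1 A s a - sd th2 t s * pol th2 A s a\<bar> * ?T s a s')" .
  qed
  also have "\<dots> = (\<Sum>s\<in>?SS. \<Sum>a\<in>?AA. \<Sum>s'\<in>?SS.
          \<bar>sd th1 t s * pol th1 A s a - sd th2 t s * pol th2 A s a\<bar> * ?T s a s')"
    by (subst sum.swap) (intro sum.cong refl sum.swap)
  also have "\<dots> = Gerr th1 th2 t"
    unfolding Gerr_def using jt_sum by (intro sum.cong refl) (simp add: sum_distrib_left[symmetric])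
  finally show ?thesis .
qed

lemma err_le: "err th1 th2 t \<le> real t * Dl"
proof (induction t)
  case 0 then show ?case by (simp add: err_def)
next
  case (Suc t) then show ?case using err_Suc[of t] G_le[of t] by (simp add: algebra_simps)
qed

lemma G_le2: "Gerr th1 th2 t \<le> real (Suc t) * Dl"
  using G_le[of t] err_le[of t] by (simp add: algebra_simps)

end
end




context mdp begin

definition "Xv \<phi> th t = (\<Sum>s\<in>joint_space S. \<Sum>a\<in>joint_space A. sd th t s * pol th A s a * \<phi> s a)"

lemma disc_Xv: "disc_value S A P mu \<gamma> \<phi> th = (\<Sum>t. \<gamma>^t * Xv \<phi> th t)"
  unfolding disc_value_def Xv_def ..

context
  fixes \<phi> :: "('i \<Rightarrow> 's) \<Rightarrow> ('i \<Rightarrow> 'a) \<Rightarrow> real" and \<phi>bar :: real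
  assumes \<phi>_range: "\<And>s a. s \<in> joint_space S \<Longrightarrow> a \<in> joint_space A \<Longrightarrow> 0 \<le> \<phi> s a \<and> \<phi> s a \<le> \<phi>bar"
begin

lemma Xv_bound: "0 \<le> Xv \<phi> th t \<and> Xv \<phi> th t \<le> \<phi>bar"
proof
  have "0 \<le> sd th t s * pol th A s a * \<phi> s a" if "s \<in> joint_space S" "a \<in> joint_space A" for s a
    using \<phi>_range[OF that] sd_nonneg[OF that(1), of th t] pol_nonneg[of th s a] by simp
  then show "0 \<le> Xv \<phi> th t" unfolding Xv_def by (intro sum_nonneg) auto
  have "Xv \<phi> th t \<le> (\<Sum>s\<in>joint_space S. \<Sum>a\<in>joint_space A. sd th t s * pol th A s a * \<phi>bar)"
    unfolding Xv_def
  proof (intro sum_mono)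
    fix s a assume sa: "s \<in> joint_space S" "a \<in> joint_space A"
    have "0 \<le> sd th t s * pol th A s a" using sd_nonneg[OF sa(1), of th t] pol_nonneg[of th s a] by simp
    then show "sd th t s * pol th A s a * \<phi> s a \<le> sd th t s * pol th A s a * \<phi>bar"
      using \<phi>_range[OF sa] by (intro mult_left_mono) auto
  qed
  also have "\<dots> = \<phi>bar"
    by (simp add: sum_distrib_left[symmetric] sum_distrib_right[symmetric] pol_sum sd_sum)
  finally show "Xv \<phi> th t \<le> \<phi>bar" .
qed

lemma Xv_diff: "\<bar>Xv \<phi> th1 t - Xv \<phi> th2 t\<bar> \<le> \<phi>bar * Gerr th1 th2 t"
proof -
  have "\<bar>Xv \<phi> th1 t - Xv \<phi> th2 t\<bar> = \<bar>\<Sum>s\<in>joint_space S. \<Sum>a\<in>joint_space A.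
      (sd th1 t s * pol th1 A s a - sd th2 t s * pol th2 A s a) * \<phi> s a\<bar>"
    unfolding Xv_def by (simp add: sum_subtractf[symmetric] algebra_simps)
  also have "\<dots> \<le> (\<Sum>s\<in>joint_space S. \<bar>\<Sum>a\<in>joint_space A.
      (sd th1 t s * pol th1 A s a - sd th2 t s * pol th2 A s a) * \<phi> s a\<bar>)" by (rule sum_abs)
  also have "\<dots> \<le> (\<Sum>s\<in>joint_space S. \<Sum>a\<in>joint_space A.
      \<bar>(sd th1 t s * pol th1 A s a - sd th2 t s * pol th2 A s a) * \<phi> s a\<bar>)" by (intro sum_mono sum_abs)
  also have "\<dots> \<le> (\<Sum>s\<in>joint_space S. \<Sum>a\<in>joint_space A.
      \<phi>bar * \<bar>sd th1 t s * pol th1 A s a - sd th2 t s * pol th2 A s a\<bar>)"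
  proof (intro sum_mono)
    fix s a assume sa: "s \<in> joint_space S" "a \<in> joint_space A"
    let ?X = "sd th1 t s * pol th1 A s a - sd th2 t s * pol th2 A s a"
    have "\<bar>?X * \<phi> s a\<bar> = \<bar>?X\<bar> * \<phi> s a" using \<phi>_range[OF sa] by (simp add: abs_mult)
    also have "\<dots> \<le> \<bar>?X\<bar> * \<phi>bar" using \<phi>_range[OF sa] by (intro mult_left_mono) auto
    finally show "\<bar>?X * \<phi> s a\<bar> \<le> \<phi>bar * \<bar>?X\<bar>" by (simp add: mult.commute)
  qed
  also have "\<dots> = \<phi>bar * Gerr th1 th2 t" unfolding Gerr_def by (simp add: sum_distrib_left)
  finally show ?thesis .
qed

lemma summable_X: "0 < \<gamma> \<Longrightarrow> \<gamma> < 1 \<Longrightarrow> summable (\<lambda>t. \<gamma>^t * Xv \<phi> th t)"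
proof -
  assume g: "0 < \<gamma>" "\<gamma> < 1"
  show ?thesis
  proof (rule summable_comparison_test')
    show "summable (\<lambda>t. \<phi>bar * \<gamma>^t)" using g by (intro summable_mult summable_geometric) simp
    fix t :: nat
    show "norm (\<gamma>^t * Xv \<phi> th t) \<le> \<phi>bar * \<gamma>^t"
      using Xv_bound[of th t] g by (simp add: abs_mult mult.commute mult_left_mono)
  qed
qed

lemma value_diff:
  assumes g: "0 < \<gamma>" "\<gamma> < 1"
    and Dl: "\<And>s. s \<in> joint_space S \<Longrightarrow> (\<Sum>a\<in>joint_space A. \<bar>pol th1 A s a - pol th2 A s a\<bar>) \<le> Dl"
  shows "\<bar>disc_value S A P mu \<gamma> \<phi> th1 - disc_value S A P mu \<gamma> \<phi> th2\<bar> \<le> \<phi>bar * Dl / (1-\<gamma>)^2"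
proof -
  define h where "h t = \<gamma>^t * Xv \<phi> th1 t - \<gamma>^t * Xv \<phi> th2 t" for t
  define b where "b t = \<phi>bar * Dl * (\<gamma>^t * real t + \<gamma>^t)" for t
  have sh: "summable h" unfolding h_def using summable_X g by (intro summable_diff)
  have diff: "disc_value S A P mu \<gamma> \<phi> th1 - disc_value S A P mu \<gamma> \<phi> th2 = suminf h"
    unfolding disc_Xv h_def using summable_X g by (subst suminf_diff) auto
  have s1: "(\<lambda>t. \<gamma>^t * real t) sums (\<gamma> / (1-\<gamma>)^2)"
    using geometric_sums_times_n[of \<gamma>] g by simp
  have s2: "(\<lambda>t. \<gamma>^t) sums (1 / (1-\<gamma>))" using geometric_sums[of \<gamma>] g by simp
  have "b sums (\<phi>bar * Dl * (\<gamma> / (1-\<gamma>)^2 + 1 / (1-\<gamma>)))"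
    unfolding b_def by (intro sums_mult sums_add s1 s2)
  moreover have "\<gamma> / (1-\<gamma>)^2 + 1 / (1-\<gamma>) = 1 / (1-\<gamma>)^2"
  proof -
    have ne: "1 - \<gamma> \<noteq> 0" using g by simp
    have "\<gamma> / (1-\<gamma>)^2 + 1 / (1-\<gamma>) = \<gamma> / (1-\<gamma>)^2 + (1-\<gamma>) / (1-\<gamma>)^2"
      using ne by (simp add: power2_eq_square)
    also have "\<dots> = 1 / (1-\<gamma>)^2" by (simp add: add_divide_distrib[symmetric])
    finally show ?thesis .
  qed
  ultimately have bs: "b sums (\<phi>bar * Dl / (1-\<gamma>)^2)" by simp
  have hb: "\<bar>h t\<bar> \<le> b t" for t
  proof -
    have "\<bar>h t\<bar> = \<gamma>^t * \<bar>Xv \<phi> th1 t - Xv \<phi> th2 t\<bar>"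
      unfolding h_def using g by (simp add: right_diff_distrib[symmetric] abs_mult)
    also have "\<dots> \<le> \<gamma>^t * (\<phi>bar * (real (Suc t) * Dl))"
    proof (intro mult_left_mono)
      have "\<phi>bar \<ge> 0" using Xv_bound[of th1 t] by linarith
      then show "\<bar>Xv \<phi> th1 t - Xv \<phi> th2 t\<bar> \<le> \<phi>bar * (real (Suc t) * Dl)"
        using Xv_diff[of th1 t th2] G_le2[OF Dl, of t] by (meson mult_left_mono order_trans)
    qed (use g in simp)
    also have "\<dots> = b t" unfolding b_def by (simp add: algebra_simps)
    finally show ?thesis .
  qed
  have "suminf h \<le> suminf b" using hb sh bs by (intro suminf_le) (auto simp: sums_iff abs_le_iff)
  moreover have "- suminf h \<le> suminf b"
    using hb sh bs by (subst suminf_minus[symmetric], simp) (intro suminf_le, auto simp: sums_iff abs_le_iff intro: summable_minus)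
  ultimately show ?thesis unfolding diff using bs by (simp add: sums_iff abs_le_iff)
qed

end
end



theorem mainTheorem6:
  fixes E :: "'i::finite \<Rightarrow> 'i \<Rightarrow> bool"
    and S :: "'i \<Rightarrow> 's set" and A :: "'i \<Rightarrow> 'a set"
    and P :: "'i \<Rightarrow> ('i \<Rightarrow> 's) \<Rightarrow> 'a \<Rightarrow> 's \<Rightarrow> real"
    and mu :: "('i \<Rightarrow> 's) \<Rightarrow> real"
    and \<gamma> :: real and i :: 'i
    and \<phi> :: "('i \<Rightarrow> 's) \<Rightarrow> ('i \<Rightarrow> 'a) \<Rightarrow> real" and \<phi>bar :: real
    and \<Phi> :: "('i \<Rightarrow> 's \<Rightarrow> 'a \<Rightarrow> real) \<Rightarrow> real"
    and \<kappa> :: nat and \<theta> \<theta>' :: "'i \<Rightarrow> 's \<Rightarrow> 'a \<Rightarrow> real"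
  assumes E_sym: "\<And>x y. E x y \<Longrightarrow> E y x"
    and S_fin: "\<And>j. finite (S j)" and S_ne: "\<And>j. S j \<noteq> {}"
    and A_fin: "\<And>j. finite (A j)" and A_ne: "\<And>j. A j \<noteq> {}"
    and P_nonneg: "\<And>j s b s'. s \<in> joint_space S \<Longrightarrow> b \<in> A j \<Longrightarrow> s' \<in> S j \<Longrightarrow> P j s b s' \<ge> 0"
    and P_sum: "\<And>j s b. s \<in> joint_space S \<Longrightarrow> b \<in> A j \<Longrightarrow> (\<Sum>s'\<in>S j. P j s b s') = 1"
    and P_local: "\<And>j s u. s \<in> joint_space S \<Longrightarrow> u \<in> joint_space S \<Longrightarrow>
                    (\<forall>k\<in>graph_ball E 1 j. s k = u k) \<Longrightarrow> P j s = P j u"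
    and mu_nonneg: "\<And>s. s \<in> joint_space S \<Longrightarrow> mu s \<ge> 0"
    and mu_sum: "(\<Sum>s\<in>joint_space S. mu s) = 1"
    and \<gamma>_pos: "0 < \<gamma>" and \<gamma>_lt1: "\<gamma> < 1"
    and \<phi>_range: "\<And>s a. s \<in> joint_space S \<Longrightarrow> a \<in> joint_space A \<Longrightarrow>
                      0 \<le> \<phi> s a \<and> \<phi> s a \<le> \<phi>bar"
    and stage_pot: "\<And>\<eta>. \<Phi> \<eta> = disc_value S A P mu \<gamma> \<phi> \<eta>"
  shows "\<bar>\<Phi> (\<lambda>j. if j \<in> graph_ball E \<kappa> i then \<theta> j else \<theta>' j) - \<Phi> \<theta>\<bar>
     \<le> sqrt 2 * \<phi>bar / (1 - \<gamma>)\<^sup>2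
        * (\<Sum>j\<in>- graph_ball E \<kappa> i. real (card (A j)))
        * Max ((\<lambda>j. param_norm (S j) (A j) (\<lambda>s a. \<theta>' j s a - \<theta> j s a)) ` (- graph_ball E \<kappa> i))"
proof -
  interpret M: mdp S A P mu
    by unfold_locales (fact S_fin S_ne A_fin A_ne P_nonneg P_sum mu_nonneg mu_sum)+
  define N where "N = graph_ball E \<kappa> i"
  define \<theta>1 where "\<theta>1 = (\<lambda>j. if j \<in> N then \<theta> j else \<theta>' j)"
  define pn where "pn j = param_norm (S j) (A j) (\<lambda>s a. \<theta>' j s a - \<theta> j s a)" for j
  define Dl where "Dl = (\<Sum>j\<in>-N. real (card (A j)) * pn j)"
  define M where "M = Max (pn ` (-N))"
  have pn0: "pn j \<ge> 0" for j unfolding pn_def param_norm_def by (intro real_sqrt_ge_zero sum_nonneg) auto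
  have pn_le: "\<bar>\<theta>' j x b - \<theta> j x b\<bar> \<le> pn j" if "x \<in> S j" "b \<in> A j" for j x b
  proof -
    have "(\<theta>' j x b - \<theta> j x b)^2 \<le> (\<Sum>a\<in>A j. (\<theta>' j x a - \<theta> j x a)^2)"
      using that A_fin by (intro member_le_sum) auto
    also have "\<dots> \<le> (\<Sum>s\<in>S j. \<Sum>a\<in>A j. (\<theta>' j s a - \<theta> j s a)^2)"
      using that S_fin by (intro member_le_sum[where f="\<lambda>s. \<Sum>a\<in>A j. (\<theta>' j s a - \<theta> j s a)^2"] sum_nonneg) auto
    finally have "sqrt ((\<theta>' j x b - \<theta> j x b)^2) \<le> pn j"
      unfolding pn_def param_norm_def by (rule real_sqrt_le_mono)
    then show ?thesis by simp
  qed
  have pol_bound: "(\<Sum>a\<in>joint_space A. \<bar>pol \<theta>1 A s a - pol \<theta> A s a\<bar>) \<le> Dl"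
    if s: "s \<in> joint_space S" for s
  proof -
    let ?f = "\<lambda>j b. softmax (\<theta>1 j) (A j) (s j) b"
    let ?g = "\<lambda>j b. softmax (\<theta> j) (A j) (s j) b"
    have "(\<Sum>a\<in>joint_space A. \<bar>pol \<theta>1 A s a - pol \<theta> A s a\<bar>)
        \<le> (\<Sum>j\<in>UNIV. \<Sum>b\<in>A j. \<bar>?f j b - ?g j b\<bar>)"
      unfolding pol_def joint_space_def
      by (rule prod_diff_PiE) (auto simp: A_fin A_ne M.softmax_rsm rsm_sum less_imp_le[OF rsm_pos[OF A_fin A_ne]])
    also have "\<dots> = (\<Sum>j\<in>-N. \<Sum>b\<in>A j. \<bar>?f j b - ?g j b\<bar>)"
      by (rule sum.mono_neutral_right) (auto simp: \<theta>1_def)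
    also have "\<dots> \<le> (\<Sum>j\<in>-N. real (card (A j)) * pn j)"
    proof (intro sum_mono)
      fix j assume j: "j \<in> -N"
      have sj: "s j \<in> S j" using s unfolding joint_space_def by (auto simp: PiE_iff)
      have "(\<Sum>b\<in>A j. \<bar>?f j b - ?g j b\<bar>)
          = (\<Sum>b\<in>A j. \<bar>rsm (\<theta>' j (s j)) (A j) b - rsm (\<theta> j (s j)) (A j) b\<bar>)"
        using j by (simp add: \<theta>1_def M.softmax_rsm)
      also have "\<dots> \<le> (\<Sum>b\<in>A j. \<bar>\<theta>' j (s j) b - \<theta> j (s j) b\<bar>)"
        by (rule rsm_L1[OF A_fin])
      also have "\<dots> \<le> (\<Sum>b\<in>A j. pn j)" using pn_le[OF sj] by (intro sum_mono) auto
      also have "\<dots> = real (card (A j)) * pn j" by simp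
      finally show "(\<Sum>b\<in>A j. \<bar>?f j b - ?g j b\<bar>) \<le> real (card (A j)) * pn j" .
    qed
    finally show ?thesis unfolding Dl_def .
  qed
  have vd: "\<bar>\<Phi> \<theta>1 - \<Phi> \<theta>\<bar> \<le> \<phi>bar * Dl / (1-\<gamma>)^2"
    unfolding stage_pot by (rule M.value_diff[OF \<phi>_range \<gamma>_pos \<gamma>_lt1 pol_bound])
  have Dl0: "Dl \<ge> 0" unfolding Dl_def using pn0 by (intro sum_nonneg) auto
  have DlM: "Dl \<le> (\<Sum>j\<in>-N. real (card (A j))) * M"
    unfolding Dl_def sum_distrib_right
    by (intro sum_mono mult_left_mono) (auto simp: M_def intro!: Max_ge)
  have phi0: "\<phi>bar \<ge> 0"
  proof -
    obtain s where "s \<in> joint_space S" using M.SS_ne by blast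
    moreover obtain a where "a \<in> joint_space A" using M.AA_ne by blast
    ultimately show ?thesis using \<phi>_range by force
  qed
  define c where "c = \<phi>bar / (1-\<gamma>)^2"
  have c0: "c \<ge> 0" unfolding c_def using phi0 by simp
  have "\<bar>\<Phi> \<theta>1 - \<Phi> \<theta>\<bar> \<le> c * Dl" using vd unfolding c_def by simp
  also have "\<dots> \<le> c * ((\<Sum>j\<in>-N. real (card (A j))) * M)" using DlM c0 by (rule mult_left_mono)
  also have "\<dots> \<le> sqrt 2 * (c * ((\<Sum>j\<in>-N. real (card (A j))) * M))"
  proof -
    have x0: "0 \<le> c * ((\<Sum>j\<in>-N. real (card (A j))) * M)" using c0 Dl0 DlM by simp
    have s2: "(1::real) \<le> sqrt 2" by simp
    show ?thesis using mult_right_mono[OF s2 x0] by simp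
  qed
  finally show ?thesis unfolding \<theta>1_def N_def M_def pn_def c_def by (simp add: mult.assoc)
qed


end
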